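(* Let $G=(V,E)$ be a graph, $\mathcal{T}$ a neighbourhood decomposition of $G$, and $\alpha$ a local linear cardinality constraint. Let $T\in\mathcal{T}$ be a type that is nonuniform with respect to $\alpha$. Then there exist a partition $\mathcal{T}'$ of $T$ and a local linear cardinality constraint $\alpha'$ such that: 1. $|\mathcal{T}'|\le 4$; 2. $\nu_{\alpha'}\big((\mathcal{T}\setminus\{T\})\cup\mathcal{T}'\big)<\nu_\alpha(\mathcal{T})$; 3. for every $X\subseteq V$, $X$ satisfies $\alpha$ if and only if $X$ satisfies $\alpha'$.
   Context: Neighbourhood decompositions: - Two vertices $u,v$ have the same neighbourhood type if $N(u)\setminus\{v\}=N(v)\setminus\{u\}$. - A neighbourhood decomposition is a partition of $V$ into classes ("types") of pairwise same-type vertices. - Any partition refining a neighbourhood decomposition is again one. Local linear cardinality constraints: - A local linear cardinality constraint is a map $\alpha$ assigning to each $v\in V$ an interval of integers $\alpha(v)=\{l_v,\dots,u_v\}\subseteq\{0,\dots,|V|\}$, possibly empty. - A set $X\subseteq V$ satisfies $\alpha$ if $|X\cap N(v)|\in\alpha(v)$ for all $v\in V$. Uniformity: - A type $T$ is uniform with respect to $\alpha$ if $\alpha(u)=\alpha(v)$ for all $u,v\in T$, and nonuniform otherwise. - $\nu_\alpha(\mathcal{T})$ denotes the number of types of $\mathcal{T}$ that are nonuniform with respect to $\alpha$. *)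

theory Defs
  imports Main
begin

definition graph :: "'a set \<Rightarrow> ('a \<Rightarrow> 'a \<Rightarrow> bool) \<Rightarrow> bool" where
  "graph V E \<longleftrightarrow> finite V \<and> (\<forall>u v. E u v \<longrightarrow> u \<in> V \<and> v \<in> V)
     \<and> (\<forall>u v. E u v \<longrightarrow> E v u) \<and> (\<forall>v. \<not> E v v)"

definition nbhd :: "'a set \<Rightarrow> ('a \<Rightarrow> 'a \<Rightarrow> bool) \<Rightarrow> 'a \<Rightarrow> 'a set" where
  "nbhd V E v = {u \<in> V. E v u}"

definition same_type :: "'a set \<Rightarrow> ('a \<Rightarrow> 'a \<Rightarrow> bool) \<Rightarrow> 'a \<Rightarrow> 'a \<Rightarrow> bool" where
  "same_type V E u v \<longleftrightarrow> nbhd V E u - {v} = nbhd V E v - {u}"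

definition is_partition :: "'a set set \<Rightarrow> 'a set \<Rightarrow> bool" where
  "is_partition P S \<longleftrightarrow> \<Union>P = S \<and> {} \<notin> P
     \<and> (\<forall>A\<in>P. \<forall>B\<in>P. A \<noteq> B \<longrightarrow> A \<inter> B = {})"

definition nbhd_decomp :: "'a set \<Rightarrow> ('a \<Rightarrow> 'a \<Rightarrow> bool) \<Rightarrow> 'a set set \<Rightarrow> bool" where
  "nbhd_decomp V E \<T> \<longleftrightarrow> is_partition \<T> V
     \<and> (\<forall>T\<in>\<T>. \<forall>u\<in>T. \<forall>v\<in>T. same_type V E u v)"

definition llcc :: "'a set \<Rightarrow> ('a \<Rightarrow> nat set) \<Rightarrow> bool" where
  "llcc V \<alpha> \<longleftrightarrow> (\<forall>v\<in>V. (\<exists>l u. \<alpha> v = {l..u}) \<and> \<alpha> v \<subseteq> {0..card V})"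

definition satisfies :: "'a set \<Rightarrow> ('a \<Rightarrow> 'a \<Rightarrow> bool) \<Rightarrow> 'a set \<Rightarrow> ('a \<Rightarrow> nat set) \<Rightarrow> bool" where
  "satisfies V E X \<alpha> \<longleftrightarrow> (\<forall>v\<in>V. card (X \<inter> nbhd V E v) \<in> \<alpha> v)"

definition uniform :: "('a \<Rightarrow> nat set) \<Rightarrow> 'a set \<Rightarrow> bool" where
  "uniform \<alpha> T \<longleftrightarrow> (\<forall>u\<in>T. \<forall>v\<in>T. \<alpha> u = \<alpha> v)"

definition nu :: "('a \<Rightarrow> nat set) \<Rightarrow> 'a set set \<Rightarrow> nat" where
  "nu \<alpha> \<T> = card {T \<in> \<T>. \<not> uniform \<alpha> T}"

end

theory Submission
  imports Defs
begin

lemma card_bound: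
  assumes fin: "finite V" and st: "same_type V E v w"
  shows "card (X \<inter> nbhd V E v) \<le> card (X \<inter> nbhd V E w) + 1"
proof -
  have "X \<inter> nbhd V E v \<subseteq> insert w (X \<inter> nbhd V E w)"
    using st unfolding same_type_def by blast
  moreover have "finite (X \<inter> nbhd V E w)" using fin unfolding nbhd_def by auto
  ultimately have "card (X \<inter> nbhd V E v) \<le> card (insert w (X \<inter> nbhd V E w))"
    by (meson card_mono finite_insert)
  also have "\<dots> \<le> card (X \<inter> nbhd V E w) + 1"
    using \<open>finite (X \<inter> nbhd V E w)\<close> by (simp add: card_insert_if)
  finally show ?thesis .
qed

lemma key:
  fixes c lo hi :: "'a \<Rightarrow> nat"
  assumes fin: "finite T" and ne: "T \<noteq> {}"
    and lh: "\<forall>v\<in>T. lo v \<le> hi v"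
    and L: "L = Max (lo ` T)" and U: "U = Min (hi ` T)"
    and cb: "\<forall>v\<in>T. \<forall>w\<in>T. c v \<le> c w + 1"
  shows "(\<forall>v\<in>T. c v \<in> {lo v..hi v}) \<longleftrightarrow>
         (\<forall>v\<in>T. c v \<in> {(if lo v = L then L else L - 1)..(if hi v = U then U else U + 1)})"
proof -
  have loL: "\<forall>v\<in>T. lo v \<le> L" using L fin by auto
  have hiU: "\<forall>v\<in>T. U \<le> hi v" using U fin by auto
  obtain wl where wl: "wl \<in> T" "lo wl = L" using L fin ne
    by (metis (mono_tags, lifting) Max_in finite_imageI image_iff image_is_empty)
  obtain wu where wu: "wu \<in> T" "hi wu = U" using U fin ne
    by (metis (mono_tags, lifting) Min_in finite_imageI image_iff image_is_empty)
  show ?thesis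
  proof
    assume H: "\<forall>v\<in>T. c v \<in> {lo v..hi v}"
    show "\<forall>v\<in>T. c v \<in> {(if lo v = L then L else L - 1)..(if hi v = U then U else U + 1)}"
    proof
      fix v assume v: "v \<in> T"
      have "lo v \<le> c v" "c v \<le> hi v" using H v by auto
      moreover have "lo v \<le> L" "U \<le> hi v" using loL hiU v by auto
      moreover have "L \<le> c wl" "c wu \<le> U" using H wl wu by auto
      moreover have "c wl \<le> c v + 1" "c v \<le> c wu + 1" using cb v wl wu by auto
      ultimately show "c v \<in> {(if lo v = L then L else L - 1)..(if hi v = U then U else U + 1)}"
        by auto
    qed
  next
    assume H: "\<forall>v\<in>T. c v \<in> {(if lo v = L then L else L - 1)..(if hi v = U then U else U + 1)}"
    show "\<forall>v\<in>T. c v \<in> {lo v..hi v}"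
    proof
      fix v assume v: "v \<in> T"
      have cwl: "L \<le> c wl" using H wl by auto
      have cwu: "c wu \<le> U" using H wu by auto
      have "c wl \<le> c v + 1" "c v \<le> c wu + 1" using cb v wl wu by auto
      moreover have "(if lo v = L then L else L - 1) \<le> c v"
        "c v \<le> (if hi v = U then U else U + 1)" using H v by auto
      ultimately show "c v \<in> {lo v..hi v}"
        using loL hiU v cwl cwu by (auto split: if_splits)
    qed
  qed
qed

theorem mainTheorem10:
  fixes V :: "'a set" and E :: "'a \<Rightarrow> 'a \<Rightarrow> bool"
    and \<T> :: "'a set set" and \<alpha> :: "'a \<Rightarrow> nat set" and T :: "'a set"
  assumes "graph V E"
    and "nbhd_decomp V E \<T>"
    and "llcc V \<alpha>"
    and "T \<in> \<T>"
    and "\<not> uniform \<alpha> T"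
  shows "\<exists>\<T>' \<alpha>'. is_partition \<T>' T \<and> llcc V \<alpha>'
     \<and> card \<T>' \<le> 4
     \<and> nu \<alpha>' ((\<T> - {T}) \<union> \<T>') < nu \<alpha> \<T>
     \<and> (\<forall>X\<subseteq>V. satisfies V E X \<alpha> \<longleftrightarrow> satisfies V E X \<alpha>')"
proof -
  have finV: "finite V" using assms(1) unfolding graph_def by auto
  have part: "is_partition \<T> V" and st: "\<forall>u\<in>T. \<forall>v\<in>T. same_type V E u v"
    using assms(2,4) unfolding nbhd_decomp_def by auto
  have TV: "T \<subseteq> V" using part assms(4) unfolding is_partition_def by auto
  have Tne: "T \<noteq> {}" using part assms(4) unfolding is_partition_def by auto
  have finT: "finite T" using TV finV finite_subset by blast
  have disj: "\<forall>B\<in>\<T> - {T}. B \<inter> T = {}" using part assms(4) unfolding is_partition_def by auto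
  have finTT: "finite \<T>" using part finV unfolding is_partition_def
    by (metis Pow_UNIV Sup_le_iff finite_Pow_iff finite_subset subset_Pow_Union)
  have general: "\<exists>\<T>' \<alpha>'. is_partition \<T>' T \<and> llcc V \<alpha>'
     \<and> card \<T>' \<le> 4
     \<and> nu \<alpha>' ((\<T> - {T}) \<union> \<T>') < nu \<alpha> \<T>
     \<and> (\<forall>X\<subseteq>V. satisfies V E X \<alpha> \<longleftrightarrow> satisfies V E X \<alpha>')"
    if P: "is_partition \<T>' T" and ll: "llcc V \<alpha>'" and c4: "card \<T>' \<le> 4"
      and out: "\<forall>v. v \<notin> T \<longrightarrow> \<alpha>' v = \<alpha> v"
      and un: "\<forall>B\<in>\<T>'. uniform \<alpha>' B"
      and sat: "\<forall>X\<subseteq>V. satisfies V E X \<alpha> \<longleftrightarrow> satisfies V E X \<alpha>'"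
    for \<T>' \<alpha>'
  proof -
    have sub: "{B \<in> (\<T> - {T}) \<union> \<T>'. \<not> uniform \<alpha>' B} \<subseteq> {B \<in> \<T>. \<not> uniform \<alpha> B} - {T}"
    proof
      fix B assume B: "B \<in> {B \<in> (\<T> - {T}) \<union> \<T>'. \<not> uniform \<alpha>' B}"
      then have "B \<in> \<T> - {T}" using un by auto
      moreover then have "\<forall>v\<in>B. \<alpha>' v = \<alpha> v" using disj out by blast
      ultimately show "B \<in> {B \<in> \<T>. \<not> uniform \<alpha> B} - {T}" using B
        unfolding uniform_def by auto
    qed
    have "nu \<alpha>' ((\<T> - {T}) \<union> \<T>') \<le> card ({B \<in> \<T>. \<not> uniform \<alpha> B} - {T})"
      unfolding nu_def by (rule card_mono) (use sub finTT in auto)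
    also have "\<dots> < nu \<alpha> \<T>" unfolding nu_def
      by (rule card_Diff1_less) (use finTT assms(4,5) in auto)
    finally show ?thesis using P ll c4 sat by blast
  qed
  show ?thesis
  proof (cases "\<exists>w\<in>T. \<alpha> w = {}")
    case True
    then obtain w where w: "w \<in> T" "\<alpha> w = {}" by auto
    define \<alpha>' where "\<alpha>' v = (if v \<in> T then {} else \<alpha> v)" for v
    show ?thesis
    proof (rule general[of "{T}" \<alpha>'])
      show "is_partition {T} T" using Tne unfolding is_partition_def by auto
      show "llcc V \<alpha>'" using assms(3) unfolding llcc_def \<alpha>'_def
        by (auto intro: exI[of _ 1] exI[of _ 0])
      show "card {T} \<le> 4" by simp
      show "\<forall>v. v \<notin> T \<longrightarrow> \<alpha>' v = \<alpha> v" by (simp add: \<alpha>'_def)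
      show "\<forall>B\<in>{T}. uniform \<alpha>' B" by (simp add: uniform_def \<alpha>'_def)
      show "\<forall>X\<subseteq>V. satisfies V E X \<alpha> = satisfies V E X \<alpha>'"
      proof (intro allI impI)
        fix X assume "X \<subseteq> V"
        have "\<not> satisfies V E X \<alpha>" using w TV unfolding satisfies_def by blast
        moreover have "\<not> satisfies V E X \<alpha>'" using w TV unfolding satisfies_def \<alpha>'_def by auto
        ultimately show "satisfies V E X \<alpha> = satisfies V E X \<alpha>'" by blast
      qed
    qed
  next
    case False
    define lo where "lo v = Min (\<alpha> v)" for v
    define hi where "hi v = Max (\<alpha> v)" for v
    have ivl: "\<alpha> v = {lo v..hi v} \<and> lo v \<le> hi v \<and> hi v \<le> card V" if v: "v \<in> T" for v
    proof -
      obtain l u where lu: "\<alpha> v = {l..u}" "\<alpha> v \<subseteq> {0..card V}"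
        using assms(3) v TV unfolding llcc_def by blast
      have "\<alpha> v \<noteq> {}" using False v by auto
      then have "l \<le> u" using lu by auto
      then have "lo v = l" "hi v = u" using lu unfolding lo_def hi_def
        by (auto intro!: Min_eqI Max_eqI)
      then show ?thesis using lu \<open>l \<le> u\<close> by auto
    qed
    define L where "L = Max (lo ` T)"
    define U where "U = Min (hi ` T)"
    define f where "f v = (lo v = L, hi v = U)" for v
    define \<alpha>' where "\<alpha>' v = (if v \<in> T then {(if lo v = L then L else L - 1)..(if hi v = U then U else U + 1)} else \<alpha> v)" for v
    define \<T>' where "\<T>' = (\<lambda>p. {v \<in> T. f v = p}) ` (f ` T)"
    have hiU: "\<forall>v\<in>T. U \<le> hi v" using U_def finT by auto
    show ?thesis
    proof (rule general[of \<T>' \<alpha>'])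
      show "is_partition \<T>' T" unfolding is_partition_def \<T>'_def by auto
      show "llcc V \<alpha>'" unfolding llcc_def
      proof
        fix v assume v: "v \<in> V"
        show "(\<exists>l u. \<alpha>' v = {l..u}) \<and> \<alpha>' v \<subseteq> {0..card V}"
        proof (cases "v \<in> T")
          case True
          have "(if hi v = U then U else U + 1) \<le> card V"
            using ivl[OF True] hiU True by (auto simp: Suc_le_eq order_le_neq_trans)
          then show ?thesis using True unfolding \<alpha>'_def by auto
        next
          case False
          then show ?thesis using assms(3) v unfolding llcc_def \<alpha>'_def by auto
        qed
      qed
      have "card \<T>' \<le> card (f ` T)" unfolding \<T>'_def by (rule card_image_le) (use finT in auto)
      also have "\<dots> \<le> card (UNIV :: (bool \<times> bool) set)" by (rule card_mono) auto
      also have "\<dots> = 4" 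
        by (simp add: UNIV_Times_UNIV[symmetric] card_cartesian_product del: UNIV_Times_UNIV)
      finally show "card \<T>' \<le> 4" .
      show "\<forall>v. v \<notin> T \<longrightarrow> \<alpha>' v = \<alpha> v" by (simp add: \<alpha>'_def)
      show "\<forall>B\<in>\<T>'. uniform \<alpha>' B" unfolding \<T>'_def uniform_def \<alpha>'_def f_def by auto
      show "\<forall>X\<subseteq>V. satisfies V E X \<alpha> = satisfies V E X \<alpha>'"
      proof (intro allI impI)
        fix X assume "X \<subseteq> V"
        define c where "c v = card (X \<inter> nbhd V E v)" for v
        have cb: "\<forall>v\<in>T. \<forall>w\<in>T. c v \<le> c w + 1"
          unfolding c_def using st card_bound[OF finV] by blast
        have eqT: "(\<forall>v\<in>T. c v \<in> {lo v..hi v}) \<longleftrightarrow>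
         (\<forall>v\<in>T. c v \<in> {(if lo v = L then L else L - 1)..(if hi v = U then U else U + 1)})"
          by (rule key[OF finT Tne _ L_def U_def cb]) (use ivl in auto)
        have A: "satisfies V E X \<alpha> \<longleftrightarrow> (\<forall>v\<in>T. c v \<in> {lo v..hi v}) \<and> (\<forall>v\<in>V-T. c v \<in> \<alpha> v)"
        proof -
          have "(\<forall>v\<in>V. c v \<in> \<alpha> v) \<longleftrightarrow> (\<forall>v\<in>T. c v \<in> \<alpha> v) \<and> (\<forall>v\<in>V-T. c v \<in> \<alpha> v)"
            using TV by blast
          moreover have "(\<forall>v\<in>T. c v \<in> \<alpha> v) \<longleftrightarrow> (\<forall>v\<in>T. c v \<in> {lo v..hi v})"
            using ivl by simp
          ultimately show ?thesis unfolding satisfies_def c_def by simp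
        qed
        have B: "satisfies V E X \<alpha>' \<longleftrightarrow> (\<forall>v\<in>T. c v \<in> {(if lo v = L then L else L - 1)..(if hi v = U then U else U + 1)}) \<and> (\<forall>v\<in>V-T. c v \<in> \<alpha> v)"
          unfolding satisfies_def c_def \<alpha>'_def using TV by auto
        show "satisfies V E X \<alpha> = satisfies V E X \<alpha>'" using A B eqT by blast
      qed
    qed
  qed
qed

end
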